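(* Let $q$ be a prime power, $n$ a positive integer with $\gcd(q,n)=1$, $s\in\mathbb{Z}_n^*$ and $t\in\mathbb{Z}_n$ with $qt\equiv t\pmod n$. A $q$-coset $Q\subseteq\mathbb{Z}_n$ satisfies $\rho_{s,t}(Q)=Q$ if and only if there exist $k\in Q$ and an integer $j\ge0$ such that $(q^j-s)k\equiv st\pmod n$.
   Context: The $q$-cosets of $\mathbb{Z}_n$ are the orbits of $\mu_q:i\mapsto qi\bmod n$. $\rho_{s,t}:\mathbb{Z}_n\to\mathbb{Z}_n$, $i\mapsto s(i+t)\bmod n$; it maps $q$-cosets to $q$-cosets. *)

theory Defs
  imports Main "HOL-Number_Theory.Number_Theory"
begin

text \<open>Z_n is represented by the residues {0..<n} (naturals).\<close>

definition q_coset :: "nat \<Rightarrow> nat \<Rightarrow> nat \<Rightarrow> nat set" where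
  "q_coset n q i = {(q ^ j * i) mod n | j. True}"

definition is_q_coset :: "nat \<Rightarrow> nat \<Rightarrow> nat set \<Rightarrow> bool" where
  "is_q_coset n q Q \<longleftrightarrow> (\<exists>i<n. Q = q_coset n q i)"

definition rho :: "nat \<Rightarrow> nat \<Rightarrow> nat \<Rightarrow> nat \<Rightarrow> nat" where
  "rho n s t i = (s * (i + t)) mod n"

definition prime_power :: "nat \<Rightarrow> bool" where
  "prime_power q \<longleftrightarrow> (\<exists>p k. prime p \<and> k \<ge> 1 \<and> q = p ^ k)"

end

theory Submission
  imports Defs
begin

lemma cond_iff:
  "[(int q ^ j - int s) * int k = int s * int t] (mod int n) \<longleftrightarrow> [q ^ j * k = s * (k + t)] (mod n)"
proof -
  have "[(int q ^ j - int s) * int k = int s * int t] (mod int n) \<longleftrightarrow>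
        int n dvd (int q ^ j - int s) * int k - int s * int t"
    by (rule cong_iff_dvd_diff)
  also have "(int q ^ j - int s) * int k - int s * int t = int (q ^ j * k) - int (s * (k + t))"
    by (simp add: algebra_simps)
  also have "int n dvd int (q ^ j * k) - int (s * (k + t)) \<longleftrightarrow> [int (q ^ j * k) = int (s * (k + t))] (mod int n)"
    by (rule cong_iff_dvd_diff[symmetric])
  also have "\<dots> \<longleftrightarrow> [q ^ j * k = s * (k + t)] (mod n)" by (rule cong_int_iff)
  finally show ?thesis .
qed

lemma coset_same:
  assumes "n > 0" "coprime q n" "k \<in> q_coset n q i"
  shows "q_coset n q k = q_coset n q i"
proof -
  obtain a where a: "k = (q ^ a * i) mod n" using assms(3) unfolding q_coset_def by auto
  define m where "m = totient n"
  have m1: "[q ^ m = 1] (mod n)" unfolding m_def using euler_theorem assms(2) by blast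
  have mpos: "m \<ge> 1" unfolding m_def using assms(1) by (simp add: Suc_leI)
  have pw: "[q ^ (m * c) = 1] (mod n)" for c
    using cong_pow[OF m1, of c] by (simp add: power_mult)
  show ?thesis
  proof
    show "q_coset n q k \<subseteq> q_coset n q i"
    proof
      fix x assume "x \<in> q_coset n q k"
      then obtain j where "x = (q ^ j * k) mod n" unfolding q_coset_def by auto
      then have "x = (q ^ (j + a) * i) mod n" using a
        by (simp add: mod_mult_right_eq power_add mult.assoc)
      then show "x \<in> q_coset n q i" unfolding q_coset_def by auto
    qed
  next
    show "q_coset n q i \<subseteq> q_coset n q k"
    proof
      fix x assume "x \<in> q_coset n q i"
      then obtain b where b: "x = (q ^ b * i) mod n" unfolding q_coset_def by auto
      have "[q ^ ((b + (m - 1) * a) + a) * i = q ^ b * i] (mod n)"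
      proof -
        have e: "(b + (m - 1) * a) + a = b + m * a" proof -
          have "(m - 1) * a + a = m * a" using mpos
            by (metis Suc_diff_1 add.commute less_eq_Suc_le mult_Suc zero_less_one le_trans)
          then show ?thesis by simp
        qed
        have "[q ^ b * q ^ (m * a) * i = q ^ b * 1 * i] (mod n)"
          by (intro cong_mult cong_refl pw)
        then show ?thesis unfolding e by (simp add: power_add)
      qed
      moreover have "(q ^ (b + (m - 1) * a) * k) mod n = (q ^ ((b + (m - 1) * a) + a) * i) mod n"
        unfolding a by (metis mod_mult_right_eq power_add mult.assoc)
      ultimately have "x = (q ^ (b + (m - 1) * a) * k) mod n" using b
        by (simp add: cong_def)
      then show "x \<in> q_coset n q k" unfolding q_coset_def by auto
    qed
  qed
qed

theorem lemma3p2: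
  fixes q n s t :: nat and Q :: "nat set"
  assumes "prime_power q" and "n > 0" and "coprime q n"
    and "s < n" and "coprime s n"
    and "t < n" and "[q * t = t] (mod n)"
    and "is_q_coset n q Q"
  shows "rho n s t ` Q = Q \<longleftrightarrow>
    (\<exists>k\<in>Q. \<exists>j::nat. [(int q ^ j - int s) * int k = int s * int t] (mod int n))"
proof -
  obtain i where Qi: "Q = q_coset n q i" using assms(8) unfolding is_q_coset_def by auto
  have Qlt: "x \<in> Q \<Longrightarrow> x < n" for x using Qi assms(2) unfolding q_coset_def by auto
  have finQ: "finite Q" using Qlt by (meson finite_lessThan finite_subset lessThan_iff subsetI)
  have qt: "[q ^ a * t = t] (mod n)" for a
  proof (induction a)
    case 0 then show ?case by simp
  next
    case (Suc a)
    have "[q * (q ^ a * t) = q * t] (mod n)" by (intro cong_mult cong_refl Suc)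
    then show ?case using assms(7) by (simp add: mult.assoc cong_trans)
  qed
  show ?thesis
  proof
    assume img: "rho n s t ` Q = Q"
    define k where "k = i mod n"
    have kQ: "k \<in> Q" unfolding Qi q_coset_def k_def by (auto intro: exI[of _ 0])
    have Qk: "Q = q_coset n q k" using coset_same[OF assms(2,3)] kQ Qi by simp
    have "rho n s t k \<in> Q" using img kQ by blast
    then obtain j where "rho n s t k = (q ^ j * k) mod n" unfolding Qk q_coset_def by auto
    then have "[q ^ j * k = s * (k + t)] (mod n)" unfolding rho_def cong_def by simp
    then show "\<exists>k\<in>Q. \<exists>j::nat. [(int q ^ j - int s) * int k = int s * int t] (mod int n)"
      using kQ cond_iff by blast
  next
    assume "\<exists>k\<in>Q. \<exists>j::nat. [(int q ^ j - int s) * int k = int s * int t] (mod int n)"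
    then obtain k j where kQ: "k \<in> Q" and kj: "[q ^ j * k = s * (k + t)] (mod n)"
      using cond_iff by blast
    have Qk: "Q = q_coset n q k" using coset_same[OF assms(2,3)] kQ Qi by simp
    have sub: "rho n s t ` Q \<subseteq> Q"
    proof
      fix y assume "y \<in> rho n s t ` Q"
      then obtain x where xQ: "x \<in> Q" and y: "y = rho n s t x" by auto
      obtain a where xa: "x = (q ^ a * k) mod n" using xQ unfolding Qk q_coset_def by auto
      have "[s * (x + t) = s * (q ^ a * k + q ^ a * t)] (mod n)"
        unfolding xa by (intro cong_mult cong_add cong_refl) (auto simp: cong_def qt[THEN cong_sym, unfolded cong_def])
      also have "s * (q ^ a * k + q ^ a * t) = q ^ a * (s * (k + t))" by (simp add: algebra_simps)
      also have "[q ^ a * (s * (k + t)) = q ^ a * (q ^ j * k)] (mod n)"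
        by (intro cong_mult cong_refl cong_sym[OF kj])
      also have "q ^ a * (q ^ j * k) = q ^ (a + j) * k" by (simp add: power_add)
      finally have "y = (q ^ (a + j) * k) mod n" unfolding y rho_def cong_def by simp
      then show "y \<in> Q" unfolding Qk q_coset_def by auto
    qed
    have inj: "inj_on (rho n s t) Q"
    proof
      fix x y assume xQ: "x \<in> Q" and yQ: "y \<in> Q" and eq: "rho n s t x = rho n s t y"
      then have "[s * (x + t) = s * (y + t)] (mod n)" unfolding rho_def cong_def by simp
      then have "[x + t = y + t] (mod n)" using cong_mult_lcancel_nat assms(5) by blast
      then have "[x = y] (mod n)" by (simp add: cong_add_rcancel_nat)
      then show "x = y" using Qlt[OF xQ] Qlt[OF yQ] by (simp add: cong_def)
    qed
    have "card (rho n s t ` Q) = card Q" using card_image[OF inj] .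
    then show "rho n s t ` Q = Q" using card_subset_eq[OF finQ sub] by simp
  qed
qed

end
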